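(* Consider the extreme Kerr case $Q=0$, $M=|a|>0$. If for some half-integer $k$ there is an energy eigenvalue $\omega\in\mathbb{R}$ (a bound state of a Dirac particle of rest mass $m>0$), then $Mm>\frac14$.
   Context: Fix real numbers $M>0$, $a$, $Q$ with $M^2=a^2+Q^2$ and put $\rho:=M$. Fix the rest mass $m>0$ and charge $e\in\mathbb{R}$ of a Dirac particle and a half-integer $k\in\{\pm\frac12,\pm\frac32,\dots\}$. For $\omega,\lambda\in\mathbb{R}$ consider the radial system for $f:(\rho,\infty)\to\mathbb{C}^2$, $$\begin{pmatrix}(r-\rho)\frac{d}{dr}+\frac{iV(r)}{r-\rho} & imr-\lambda\\ -imr-\lambda & (r-\rho)\frac{d}{dr}-\frac{iV(r)}{r-\rho}\end{pmatrix}f(r)=0,\qquad V(r):=\omega(r^2+a^2)+ka+eQr,$$ and the angular system for $g:(0,\pi)\to\mathbb{C}^2$, $$\begin{pmatrix}\frac{d}{d\theta}+\frac{\cot\theta}{2}-W(\theta) & -am\cos\theta+\lambda\\ am\cos\theta+\lambda & -\frac{d}{d\theta}-\frac{\cot\theta}{2}-W(\theta)\end{pmatrix}g(\theta)=0,\qquad W(\theta):=a\omega\sin\theta+\frac{k}{\sin\theta}.$$ A number $\omega\in\mathbb{R}$ is called an energy eigenvalue (for azimuthal quantum number $k$) if there exist $\lambda\in\mathbb{R}$ and nontrivial solutions $f$ of the radial system and $g$ of the angular system with $$\int_\rho^\infty|f(r)|^2\frac{r^2+a^2}{(r-\rho)^2}\,dr<\infty,\qquad\int_0^\pi|g(\theta)|^2\sin\theta\,d\theta<\infty.$$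 *)

theory Defs
  imports "HOL-Analysis.Analysis"
begin

definition half_integer :: "real \<Rightarrow> bool" where
  "half_integer k \<longleftrightarrow> (\<exists>n::int. k = real_of_int n + 1/2)"

definition Vpot :: "real \<Rightarrow> real \<Rightarrow> real \<Rightarrow> real \<Rightarrow> real \<Rightarrow> real \<Rightarrow> real" where
  "Vpot a Q e k \<omega> r = \<omega> * (r^2 + a^2) + k * a + e * Q * r"

definition Wpot :: "real \<Rightarrow> real \<Rightarrow> real \<Rightarrow> real \<Rightarrow> real" where
  "Wpot a k \<omega> \<theta> = a * \<omega> * sin \<theta> + k / sin \<theta>"

definition radial_solution ::
  "real \<Rightarrow> real \<Rightarrow> real \<Rightarrow> real \<Rightarrow> real \<Rightarrow> real \<Rightarrow> real \<Rightarrow> real \<Rightarrow>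
   (real \<Rightarrow> complex) \<Rightarrow> (real \<Rightarrow> complex) \<Rightarrow> bool" where
  "radial_solution M a Q m e k \<omega> lam f1 f2 \<longleftrightarrow>
     (\<forall>r\<in>{M<..}. \<exists>d1 d2.
        (f1 has_vector_derivative d1) (at r) \<and> (f2 has_vector_derivative d2) (at r) \<and>
        complex_of_real (r - M) * d1
          + \<i> * complex_of_real (Vpot a Q e k \<omega> r / (r - M)) * f1 r
          + (\<i> * complex_of_real (m * r) - complex_of_real lam) * f2 r = 0 \<and>
        (- \<i> * complex_of_real (m * r) - complex_of_real lam) * f1 r
          + complex_of_real (r - M) * d2
          - \<i> * complex_of_real (Vpot a Q e k \<omega> r / (r - M)) * f2 r = 0)"

definition angular_solution ::
  "real \<Rightarrow> real \<Rightarrow> real \<Rightarrow> real \<Rightarrow> real \<Rightarrow>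
   (real \<Rightarrow> complex) \<Rightarrow> (real \<Rightarrow> complex) \<Rightarrow> bool" where
  "angular_solution a m k \<omega> lam g1 g2 \<longleftrightarrow>
     (\<forall>\<theta>\<in>{0<..<pi}. \<exists>d1 d2.
        (g1 has_vector_derivative d1) (at \<theta>) \<and> (g2 has_vector_derivative d2) (at \<theta>) \<and>
        d1 + complex_of_real (cot \<theta> / 2) * g1 \<theta> - complex_of_real (Wpot a k \<omega> \<theta>) * g1 \<theta>
          + complex_of_real (- a * m * cos \<theta> + lam) * g2 \<theta> = 0 \<and>
        complex_of_real (a * m * cos \<theta> + lam) * g1 \<theta>
          - d2 - complex_of_real (cot \<theta> / 2) * g2 \<theta> - complex_of_real (Wpot a k \<omega> \<theta>) * g2 \<theta> = 0)"

definition energy_eigenvalue ::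
  "real \<Rightarrow> real \<Rightarrow> real \<Rightarrow> real \<Rightarrow> real \<Rightarrow> real \<Rightarrow> real \<Rightarrow> bool" where
  "energy_eigenvalue M a Q m e k \<omega> \<longleftrightarrow>
     (\<exists>lam::real. \<exists>f1 f2 g1 g2.
        radial_solution M a Q m e k \<omega> lam f1 f2 \<and>
        (\<exists>r\<in>{M<..}. f1 r \<noteq> 0 \<or> f2 r \<noteq> 0) \<and>
        (\<lambda>r. (cmod (f1 r)^2 + cmod (f2 r)^2) * (r^2 + a^2) / (r - M)^2) integrable_on {M<..} \<and>
        angular_solution a m k \<omega> lam g1 g2 \<and>
        (\<exists>\<theta>\<in>{0<..<pi}. g1 \<theta> \<noteq> 0 \<or> g2 \<theta> \<noteq> 0) \<and>
        (\<lambda>\<theta>. (cmod (g1 \<theta>)^2 + cmod (g2 \<theta>)^2) * sin \<theta>) integrable_on {0<..<pi})"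

end

theory Submission
  imports Defs "HOL-Real_Asymp.Real_Asymp"
begin

lemma divlin: "(d::real) \<noteq> 0 \<Longrightarrow> a*(A/d) - b*(B/d) = (a* A - b* B)/d"
  by (simp add: field_simps)

lemma Lam_deriv:
  fixes x y P :: "real \<Rightarrow> real" and m lam w rho r :: real
  assumes m: "m > 0" and r: "r > rho" "rho > 0"
  and dx: "(x has_real_derivative (2* w*(r+rho)* y r + lam* P r)/(r-rho)) (at r)"
  and dy: "(y has_real_derivative (-2* w*(r+rho)* x r + m* r* P r)/(r-rho)) (at r)"
  shows "((\<lambda>t. 2*(m* t* x t - lam* y t) / sqrt (m^2* t^2 + lam^2)) has_real_derivative
     2*(2* w*(r+rho)*(m^2* r^2+lam^2) + m* lam*(r-rho))*(m* r* y r + lam* x r)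
       / (sqrt (m^2* r^2 + lam^2)^3*(r-rho))) (at r)"
proof -
  define S where "S = sqrt (m^2* r^2 + lam^2)"
  have pos: "m^2* r^2 + lam^2 > 0" using assms by (simp add: add_pos_nonneg)
  have Spos: "S > 0" unfolding S_def using pos by simp
  have S2: "S^2 = m^2* r^2 + lam^2" unfolding S_def using pos by simp
  have dS: "((\<lambda>t. sqrt (m^2* t^2 + lam^2)) has_real_derivative m^2* r / S) (at r)"
    unfolding S_def using pos
    by (auto intro!: derivative_eq_intros simp: field_simps power2_eq_square)
  have rr: "r - rho > 0" using r by simp
  define X where "X = (2* w*(r+rho)* y r + lam* P r)/(r-rho)"
  define Y where "Y = (-2* w*(r+rho)* x r + m* r* P r)/(r-rho)"
  have dL: "((\<lambda>t. 2*(m* t* x t - lam* y t)) has_real_derivative 2*(m* x r + m* r* X - lam* Y)) (at r)"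
    using dx dy unfolding X_def[symmetric] Y_def[symmetric]
    by (auto intro!: derivative_eq_intros simp: algebra_simps)
  have d: "((\<lambda>t. 2*(m* t* x t - lam* y t) / sqrt (m^2* t^2 + lam^2)) has_real_derivative
       (2*(m* x r + m* r* X - lam* Y) * S - 2*(m* r* x r - lam* y r) * (m^2* r/S)) / (S* S)) (at r)"
    using DERIV_divide[OF dL dS] Spos unfolding S_def by simp
  have mX: "m* r* X - lam* Y = 2* w*(r+rho)*(m* r* y r + lam* x r)/(r-rho)"
  proof -
    have "m* r* X - lam* Y = (m* r*(2* w*(r+rho)* y r + lam* P r) - lam*(-2* w*(r+rho)* x r + m* r* P r))/(r-rho)"
      unfolding X_def Y_def using divlin[of "r-rho"] rr by simp
    also have "... = 2* w*(r+rho)*(m* r* y r + lam* x r)/(r-rho)"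
      by (rule arg_cong[where f="\<lambda>u. u/(r-rho)"]) (simp add: algebra_simps)
    finally show ?thesis .
  qed
  have e1: "(2*(m* x r + m* r* X - lam* Y) * S - 2*(m* r* x r - lam* y r) * (m^2* r/S)) / (S* S)
     = (2* m* x r* S^2 + 2* S^2*(m* r* X - lam* Y) - 2*(m* r* x r - lam* y r)*(m^2* r))/(S^3)"
    using Spos by (simp add: field_simps power2_eq_square power3_eq_cube)
  also have "... = (2* m* lam*(m* r* y r + lam* x r) + 2* S^2*(2* w*(r+rho)*(m* r* y r + lam* x r)/(r-rho)))/S^3"
    unfolding mX S2 by (simp add: algebra_simps power2_eq_square)
  also have "... = 2*(2* w*(r+rho)*(m^2* r^2+lam^2) + m* lam*(r-rho))*(m* r* y r + lam* x r)
       / (S^3*(r-rho))"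
    using rr Spos by (simp add: S2 field_simps)
  finally show ?thesis using d unfolding S_def by simp
qed

lemma B_deriv:
  fixes m lam w rho r :: real
  assumes m: "m > 0" and r: "r > 0"
  and ne: "2* w*(r+rho)*(m^2* r^2+lam^2) + m* lam*(r-rho) - 2* sqrt (m^2* r^2 + lam^2)^3 \<noteq> 0"
  shows "((\<lambda>t. (2* w*(t+rho)*(m^2* t^2+lam^2) + m* lam*(t-rho)) /
          (2* w*(t+rho)*(m^2* t^2+lam^2) + m* lam*(t-rho) - 2* sqrt (m^2* t^2 + lam^2)^3))
    has_real_derivative
     2* sqrt (m^2* r^2 + lam^2)*(2* w*(m^2* r^2+lam^2)*(m^2* r* rho - lam^2) + m* lam*(2* m^2* r^2 - 3* m^2* r* rho - lam^2))
      / (2* w*(r+rho)*(m^2* r^2+lam^2) + m* lam*(r-rho) - 2* sqrt (m^2* r^2 + lam^2)^3)^2) (at r)"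
proof -
  define S where "S = sqrt (m^2* r^2 + lam^2)"
  define W where "W = 2* w*(r+rho)*(m^2* r^2+lam^2) + m* lam*(r-rho)"
  define W' where "W' = 2* w*((m^2* r^2+lam^2) + (r+rho)*(2* m^2* r)) + m* lam"
  have pos: "m^2* r^2 + lam^2 > 0" using assms by (simp add: add_pos_nonneg)
  have Spos: "S > 0" unfolding S_def using pos by simp
  have S2: "S^2 = m^2* r^2 + lam^2" unfolding S_def using pos by simp
  have dS: "((\<lambda>t. sqrt (m^2* t^2 + lam^2)) has_real_derivative m^2* r / S) (at r)"
    unfolding S_def using pos
    by (auto intro!: derivative_eq_intros simp: field_simps power2_eq_square)
  have dS3: "((\<lambda>t. sqrt (m^2* t^2 + lam^2)^3) has_real_derivative 3* S* m^2* r) (at r)"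
    using DERIV_power[OF dS, of 3] Spos unfolding S_def[symmetric]
    by (simp add: power2_eq_square field_simps)
  have dW: "((\<lambda>t. 2* w*(t+rho)*(m^2* t^2+lam^2) + m* lam*(t-rho)) has_real_derivative W') (at r)"
    unfolding W'_def by (auto intro!: derivative_eq_intros simp: algebra_simps power2_eq_square)
  have dD: "((\<lambda>t. 2* w*(t+rho)*(m^2* t^2+lam^2) + m* lam*(t-rho) - 2* sqrt (m^2* t^2 + lam^2)^3)
     has_real_derivative W' - 2*(3* S* m^2* r)) (at r)"
    using DERIV_diff[OF dW DERIV_cmult[OF dS3, of 2]] by simp
  have ne': "W - 2* S^3 \<noteq> 0" using ne unfolding W_def S_def .
  have d: "((\<lambda>t. (2* w*(t+rho)*(m^2* t^2+lam^2) + m* lam*(t-rho)) /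
          (2* w*(t+rho)*(m^2* t^2+lam^2) + m* lam*(t-rho) - 2* sqrt (m^2* t^2 + lam^2)^3))
    has_real_derivative (W'*(W - 2* S^3) - W*(W' - 2*(3* S* m^2* r)))/((W - 2* S^3)*(W - 2* S^3))) (at r)"
    using DERIV_divide[OF dW dD] ne' unfolding W_def[symmetric] S_def[symmetric] by simp
  have "W'*(W - 2* S^3) - W*(W' - 2*(3* S* m^2* r)) = 2* S*(3* m^2* r* W - S^2* W')"
    by (simp add: algebra_simps power3_eq_cube power2_eq_square)
  also have "3* m^2* r* W - S^2* W' = 2* w*(m^2* r^2+lam^2)*(m^2* r* rho - lam^2) + m* lam*(2* m^2* r^2 - 3* m^2* r* rho - lam^2)"
    unfolding S2 W_def W'_def by (simp add: algebra_simps power2_eq_square)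
  finally show ?thesis using d unfolding W_def[symmetric] S_def[symmetric] by (simp add: power2_eq_square)
qed



lemma Wm_bound:
  fixes m lam rho r :: real
  assumes m: "m > 0" and rho: "rho > 0" and r: "r > rho"
    and r1: "r \<ge> lam^2/(m^2* rho)" and r2: "r \<ge> 2*\<bar>lam\<bar>/(m^2* rho)"
  shows "2* m*(r+rho)*(m^2* r^2+lam^2) + m* lam*(r-rho) - 2 * sqrt (m^2* r^2 + lam^2)^3 \<ge> m^3* rho* r^2/2"
proof -
  define S where "S = sqrt (m^2* r^2 + lam^2)"
  have pos: "m^2* r^2 + lam^2 > 0" using assms by (simp add: add_pos_nonneg)
  have Spos: "S > 0" unfolding S_def using pos by simp
  have S2: "S^2 = m^2* r^2 + lam^2" unfolding S_def using pos by simp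
  have rpos: "r > 0" using r rho by simp
  have "lam^2 \<le> m^2* rho* r" using r1 m rho by (simp add: field_simps)
  moreover have "(m* r + m* rho/2)^2 = m^2* r^2 + m^2* rho* r + m^2* rho^2/4"
    by (simp add: power2_eq_square algebra_simps)
  moreover have "m^2* rho^2/4 \<ge> 0" by simp
  ultimately have "S^2 \<le> (m* r + m* rho/2)^2" unfolding S2 by linarith
  hence Sle: "S \<le> m* r + m* rho/2" using Spos m rho rpos
    by (meson power2_le_imp_le add_pos_pos mult_pos_pos half_gt_zero less_imp_le)
  have eq: "2* m*(r+rho)*(m^2* r^2+lam^2) + m* lam*(r-rho) - 2* S^3 = 2* S^2*(m*(r+rho) - S) + m* lam*(r-rho)"
    unfolding S2[symmetric] by (simp add: algebra_simps power2_eq_square power3_eq_cube)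
  have h: "m* rho/2 \<le> m*(r+rho) - S" using Sle by (simp add: ring_distribs)
  have a1: "2* S^2*(m*(r+rho) - S) \<ge> 2* S^2*(m* rho/2)"
    using h by (intro mult_left_mono) auto
  have a2: "S^2 \<ge> m^2* r^2" unfolding S2 by simp
  have a3: "m* lam*(r-rho) \<ge> -(m*\<bar>lam\<bar>* r)"
  proof -
    have "\<bar>r - rho\<bar> \<le> r" using r rho by simp
    hence "m*\<bar>lam\<bar>*\<bar>r - rho\<bar> \<le> m*\<bar>lam\<bar>* r" using m by (intro mult_left_mono) auto
    hence "\<bar>m* lam*(r-rho)\<bar> \<le> m*\<bar>lam\<bar>* r" using m by (simp add: abs_mult)
    thus ?thesis by linarith
  qed
  have a4: "m^3* rho* r^2/2 \<ge> m*\<bar>lam\<bar>* r"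
  proof -
    have "2*\<bar>lam\<bar> \<le> m^2* rho* r" using r2 m rho by (simp add: field_simps)
    hence "m* r*(2*\<bar>lam\<bar>) \<le> m* r*(m^2* rho* r)" using m rpos by (intro mult_left_mono) auto
    thus ?thesis by (simp add: power2_eq_square power3_eq_cube algebra_simps)
  qed
  have "2* S^2*(m* rho/2) \<ge> 2*(m^2* r^2)*(m* rho/2)" using a2 m rho by (intro mult_right_mono) auto
  hence "2* S^2*(m* rho/2) \<ge> m^3* rho* r^2" by (simp add: power2_eq_square power3_eq_cube algebra_simps)
  thus ?thesis using eq a1 a3 a4 unfolding S_def by linarith
qed


lemma Wm_upper:
  fixes m lam rho r :: real
  assumes m: "m > 0" and rho: "rho > 0" and r: "r > rho" and r1: "r \<ge> 1"
  shows "2* m*(r+rho)*(m^2* r^2+lam^2) + m* lam*(r-rho) \<le> (4* m*(m^2+lam^2) + m*\<bar>lam\<bar>)* r^3"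
proof -
  have rpos: "r > 0" using r rho by simp
  have "lam^2 \<le> lam^2 * r^2" using r1 by (simp add: mult_le_cancel_left1 one_le_power)
  hence b1: "m^2* r^2+lam^2 \<le> (m^2+lam^2)* r^2" by (simp add: algebra_simps)
  have b2: "r + rho \<le> 2* r" using r by simp
  have "2* m*(r+rho)*(m^2* r^2+lam^2) \<le> 2* m*(2* r)*((m^2+lam^2)* r^2)"
    using m b1 b2 rpos rho by (intro mult_mono) (auto intro!: add_nonneg_nonneg)
  moreover have "m* lam*(r-rho) \<le> m*\<bar>lam\<bar>* r^3"
  proof -
    have "m* lam*(r-rho) \<le> \<bar>m* lam*(r-rho)\<bar>" by simp
    also have "... \<le> m*\<bar>lam\<bar>* r"
    proof -
      have "\<bar>r - rho\<bar> \<le> r" using r rho by simp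
      hence "m*\<bar>lam\<bar>*\<bar>r - rho\<bar> \<le> m*\<bar>lam\<bar>* r" using m by (intro mult_left_mono) auto
      thus ?thesis using m by (simp add: abs_mult)
    qed
    also have "... \<le> m*\<bar>lam\<bar>* r^3"
    proof -
      have "r^1 \<le> r^3" using r1 by (intro power_increasing) auto
      hence "r \<le> r^3" by simp
      thus ?thesis using m by (intro mult_left_mono) auto
    qed
    finally show ?thesis .
  qed
  ultimately show ?thesis by (simp add: algebra_simps power2_eq_square power3_eq_cube)
qed

lemma cancel_id:
  fixes d qq Wv K :: real
  assumes "d \<noteq> 0" "qq \<noteq> 0" "Wv - 2* qq \<noteq> 0"
  shows "Wv/(Wv - 2* qq) * (4* K/d - 2* Wv* K/(qq* d)) + 2* Wv* K/(qq* d) = 0"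
proof -
  have "4* K/d - 2* Wv* K/(qq* d) = -2*(Wv - 2* qq)* K/(qq* d)" using assms by (simp add: field_simps)
  moreover have "Wv/(Wv - 2* qq) * (-2*(Wv - 2* qq)* K/(qq* d)) = -2* Wv* K/(qq* d)" using assms by (simp add: field_simps)
  ultimately have "Wv/(Wv - 2* qq) * (4* K/d - 2* Wv* K/(qq* d)) = -2* Wv* K/(qq* d)" by simp
  thus ?thesis by simp
qed

lemma inf_core:
  fixes x y P :: "real \<Rightarrow> real" and m lam w rho :: real
  assumes m: "m > 0" and rho: "rho > 0" and w: "w \<ge> m"
  and dx: "\<And>r. r > rho \<Longrightarrow> (x has_real_derivative (2* w*(r+rho)* y r + lam* P r)/(r-rho)) (at r)"
  and dy: "\<And>r. r > rho \<Longrightarrow> (y has_real_derivative (-2* w*(r+rho)* x r + m* r* P r)/(r-rho)) (at r)"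
  and dP: "\<And>r. r > rho \<Longrightarrow> (P has_real_derivative 4*(m* r* y r + lam* x r)/(r-rho)) (at r)"
  and cone: "\<And>r. r > rho \<Longrightarrow> (x r)^2 + (y r)^2 \<le> (P r)^2/4"
  and pos: "\<And>r. r > rho \<Longrightarrow> P r > 0"
  shows "\<exists>R c. R > rho \<and> c > 0 \<and> (\<forall>r \<ge> R. P r \<ge> c / r)"
proof -
  define S where "S = (\<lambda>t. sqrt (m^2* t^2 + lam^2))"
  define W where "W = (\<lambda>t. 2* w*(t+rho)*(m^2* t^2+lam^2) + m* lam*(t-rho))"
  define Wm where "Wm = (\<lambda>t. 2* m*(t+rho)*(m^2* t^2+lam^2) + m* lam*(t-rho))"
  define E where "E = (\<lambda>t. 2* w*(m^2* t^2+lam^2)*(m^2* t* rho - lam^2) + m* lam*(2* m^2* t^2 - 3* m^2* t* rho - lam^2))"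
  define B where "B = (\<lambda>t. W t / (W t - 2 * S t ^ 3))"
  define Lam where "Lam = (\<lambda>t. 2*(m* t* x t - lam* y t) / S t)"
  define G where "G = (\<lambda>t. B t * (P t - Lam t) + Lam t)"
  have wpos: "w > 0" using m w by simp
  have ev1: "eventually (\<lambda>t. t \<ge> lam^2/(m^2* rho) \<and> t \<ge> 2*\<bar>lam\<bar>/(m^2* rho)) at_top"
    by (intro eventually_conj eventually_ge_at_top)
  have ev2: "eventually (\<lambda>t. E t \<ge> 0) at_top"
    unfolding E_def using m rho wpos by real_asymp
  have ev3: "eventually (\<lambda>t::real. t \<ge> 1) at_top"
    using eventually_ge_at_top[of "1::real"] by simp
  have ev4: "eventually (\<lambda>t. t > rho + 1) at_top" by (rule eventually_gt_at_top)
  have ev5: "eventually (\<lambda>t. Wm t > 0) at_top"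
    unfolding Wm_def using m rho by real_asymp
  have "eventually (\<lambda>t. (t \<ge> lam^2/(m^2* rho) \<and> t \<ge> 2*\<bar>lam\<bar>/(m^2* rho)) \<and> E t \<ge> 0
     \<and> t \<ge> 1 \<and> t > rho + 1) at_top"
    using ev1 ev2 ev3 ev4 by eventually_elim auto
  then obtain R0 where R0: "\<And>t. t \<ge> R0 \<Longrightarrow> (t \<ge> lam^2/(m^2* rho) \<and> t \<ge> 2*\<bar>lam\<bar>/(m^2* rho)) \<and> E t \<ge> 0
     \<and> t \<ge> 1 \<and> t > rho + 1"
    unfolding eventually_at_top_linorder by blast
  define R where "R = max R0 (rho + 2)"
  have R: "\<And>t. t \<ge> R \<Longrightarrow> (t \<ge> lam^2/(m^2* rho) \<and> t \<ge> 2*\<bar>lam\<bar>/(m^2* rho)) \<and> E t \<ge> 0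
     \<and> t \<ge> 1 \<and> t > rho + 1" using R0 unfolding R_def by auto
  have Rgt: "R > rho" unfolding R_def by simp
  define C where "C = 4* m*(m^2+lam^2) + m*\<bar>lam\<bar>"
  have Cpos: "C > 0" unfolding C_def using m by (simp add: add_pos_nonneg)
  have facts: "W t - 2 * S t ^ 3 > 0 \<and> W t > 0 \<and> B t \<ge> 1 \<and> \<bar>Lam t\<bar> \<le> P t
      \<and> 1 / B t \<ge> m^3* rho/(2* C* t) \<and> (G has_real_derivative
       2 * S t * E t / (W t - 2 * S t ^ 3)^2 * (P t - Lam t)) (at t)" if t: "t \<ge> R" for t
  proof -
    from R[OF t] have t1: "t \<ge> lam^2/(m^2* rho)" "t \<ge> 2*\<bar>lam\<bar>/(m^2* rho)" "E t \<ge> 0" "t \<ge> 1" "t > rho + 1"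
      by auto
    have tr: "t > rho" using t1 by simp
    have tpos: "t > 0" using tr rho by simp
    have pos2: "m^2* t^2 + lam^2 > 0" using m tpos by (simp add: add_pos_nonneg)
    have Spos: "S t > 0" unfolding S_def using pos2 by simp
    have S2: "S t ^ 2 = m^2* t^2 + lam^2" unfolding S_def using pos2 by simp
    have Wmb: "Wm t - 2 * S t ^ 3 \<ge> m^3* rho* t^2/2"
      using Wm_bound[OF m rho tr t1(1) t1(2)] unfolding Wm_def S_def .
    have Wmu: "Wm t \<le> C * t^3"
      using Wm_upper[OF m rho tr t1(4)] unfolding Wm_def C_def .
    have WWm: "W t \<ge> Wm t"
    proof -
      have "W t - Wm t = 2*(w-m)*(t+rho)*(m^2* t^2+lam^2)" unfolding W_def Wm_def by (simp add: algebra_simps)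
      also have "... \<ge> 0" using w tr rho pos2 by (intro mult_nonneg_nonneg) auto
      finally show ?thesis by simp
    qed
    have q0: "m^3* rho* t^2/2 > 0" using m rho tpos by simp
    have Wm2: "Wm t - 2 * S t ^ 3 > 0" using Wmb q0 by linarith
    have D: "W t - 2 * S t ^ 3 > 0" using Wm2 WWm by linarith
    have S3: "S t ^ 3 > 0" using Spos by simp
    have Wpos: "W t > 0" using D S3 by linarith
    have Wmpos: "Wm t > 0" using Wm2 S3 by linarith
    have B1: "B t \<ge> 1" unfolding B_def using D Wpos S3 by (simp add: field_simps)
    have cs: "(m* t* x t - lam* y t)^2 \<le> (S t)^2 * ((P t)^2/4)"
    proof -
      have "(m* t* x t - lam* y t)^2 + (m* t* y t + lam* x t)^2 = (S t)^2 * ((x t)^2 + (y t)^2)"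
        unfolding S2 by (simp add: algebra_simps power2_eq_square)
      moreover have "(S t)^2 * ((x t)^2 + (y t)^2) \<le> (S t)^2 * ((P t)^2/4)"
        using cone[OF tr] by (intro mult_left_mono) auto
      moreover have "(m* t* y t + lam* x t)^2 \<ge> 0" by simp
      ultimately show ?thesis by linarith
    qed
    have "\<bar>m* t* x t - lam* y t\<bar> \<le> S t * (P t / 2)"
    proof -
      have "(m* t* x t - lam* y t)^2 \<le> (S t * (P t/2))^2" using cs by (simp add: power_mult_distrib power_divide)
      moreover have "S t * (P t / 2) \<ge> 0" using Spos pos[OF tr] by simp
      ultimately show ?thesis using abs_le_square_iff by (metis abs_of_nonneg)
    qed
    hence Lb: "\<bar>Lam t\<bar> \<le> P t"
    proof -
      assume a: "\<bar>m* t* x t - lam* y t\<bar> \<le> S t * (P t / 2)"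
      have ab: "\<bar>2*(m* t* x t - lam* y t)\<bar> = 2*\<bar>m* t* x t - lam* y t\<bar>" by (simp only: abs_mult)
      have "\<bar>Lam t\<bar> = \<bar>2*(m* t* x t - lam* y t)\<bar> / S t" unfolding Lam_def using Spos
        by (simp add: abs_divide)
      also have "... = 2*\<bar>m* t* x t - lam* y t\<bar> / S t" by (simp only: ab)
      also have "... \<le> 2*(S t * (P t / 2)) / S t" using a Spos by (intro divide_right_mono) auto
      also have "... = P t" using Spos by simp
      finally show ?thesis .
    qed
    have invB: "1 / B t = (W t - 2 * S t ^ 3) / W t" unfolding B_def by simp
    have "(W t - 2 * S t ^ 3) / W t \<ge> (Wm t - 2 * S t ^ 3) / Wm t"
    proof -
      have "(W t - 2 * S t ^ 3) / W t = 1 - 2 * S t ^ 3 / W t" using Wpos by (simp add: field_simps)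
      moreover have "(Wm t - 2 * S t ^ 3) / Wm t = 1 - 2 * S t ^ 3 / Wm t" using Wmpos by (simp add: field_simps)
      moreover have "2 * S t ^ 3 / W t \<le> 2 * S t ^ 3 / Wm t" using WWm Wmpos S3
        by (intro divide_left_mono) auto
      ultimately show ?thesis by linarith
    qed
    moreover have "(Wm t - 2 * S t ^ 3) / Wm t \<ge> (m^3* rho* t^2/2) / (C * t^3)"
      using Wmb Wmu Wmpos q0 by (intro frac_le) auto
    moreover have "(m^3* rho* t^2/2) / (C * t^3) = m^3* rho/(2* C* t)"
      using tpos Cpos by (simp add: field_simps power2_eq_square power3_eq_cube)
    ultimately have ib: "1 / B t \<ge> m^3* rho/(2* C* t)" using invB by linarith
    have dB: "(B has_real_derivative 2 * S t * E t / (W t - 2 * S t ^ 3)^2) (at t)"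
      using B_deriv[OF m tpos, of w rho lam] D unfolding B_def W_def S_def E_def by simp
    have dL: "(Lam has_real_derivative 2* W t*(m* t* y t + lam* x t) / (S t^3*(t-rho))) (at t)"
      using Lam_deriv[where x=x and y=y and P=P and m=m and lam=lam and w=w and rho=rho and r=t, OF m tr rho dx[OF tr] dy[OF tr]] unfolding Lam_def W_def S_def by simp
    have dG: "(G has_real_derivative 2 * S t * E t / (W t - 2 * S t ^ 3)^2 * (P t - Lam t)
        + B t * (4*(m* t* y t + lam* x t)/(t-rho) - 2* W t*(m* t* y t + lam* x t) / (S t^3*(t-rho)))
        + 2* W t*(m* t* y t + lam* x t) / (S t^3*(t-rho))) (at t)"
      unfolding G_def by (auto intro!: derivative_eq_intros dB dL dP[OF tr])
    have eq0: "B t * (4*(m* t* y t + lam* x t)/(t-rho) - 2* W t*(m* t* y t + lam* x t) / (S t^3*(t-rho)))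
        + 2* W t*(m* t* y t + lam* x t) / (S t^3*(t-rho)) = 0"
      unfolding B_def using cancel_id[of "t-rho" "S t ^ 3" "W t" "m* t* y t + lam* x t"] tr S3 D by simp
    have dG': "(G has_real_derivative 2 * S t * E t / (W t - 2 * S t ^ 3)^2 * (P t - Lam t)) (at t)"
      by (rule DERIV_cong[OF dG]) (simp only: add.assoc eq0 add_0_right)
    show ?thesis using D Wpos B1 Lb ib dG' by blast
  qed
  have Gmono: "G R \<le> G t" if t: "t \<ge> R" for t
  proof (rule DERIV_nonneg_imp_nondecreasing[OF t])
    fix u assume u: "R \<le> u" "u \<le> t"
    have fu: "W u - 2 * S u ^ 3 > 0 \<and> \<bar>Lam u\<bar> \<le> P u \<and> (G has_real_derivative 2 * S u * E u / (W u - 2 * S u ^ 3)^2 * (P u - Lam u)) (at u)"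
      using facts[OF u(1)] by blast
    hence f: "W u - 2 * S u ^ 3 > 0" "\<bar>Lam u\<bar> \<le> P u"
      and d: "(G has_real_derivative 2 * S u * E u / (W u - 2 * S u ^ 3)^2 * (P u - Lam u)) (at u)"
      by blast+
    have Eu: "E u \<ge> 0" using R[OF u(1)] by auto
    have Su: "S u \<ge> 0" unfolding S_def by simp
    have "2 * S u * E u / (W u - 2 * S u ^ 3)^2 * (P u - Lam u) \<ge> 0"
      using f Eu Su by (intro mult_nonneg_nonneg divide_nonneg_nonneg) auto
    thus "\<exists>y. (G has_real_derivative y) (at u) \<and> 0 \<le> y" using d by blast
  qed
  have GR: "G R \<ge> P R"
  proof -
    have fR: "B R \<ge> 1 \<and> \<bar>Lam R\<bar> \<le> P R" using facts[OF order.refl] by blast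
    hence "B R \<ge> 1" "\<bar>Lam R\<bar> \<le> P R" by blast+
    moreover have "G R = (B R - 1) * (P R - Lam R) + P R" unfolding G_def by (simp add: algebra_simps)
    moreover have "(B R - 1) * (P R - Lam R) \<ge> 0" using calculation by (intro mult_nonneg_nonneg) auto
    ultimately show ?thesis by linarith
  qed
  have PR: "P R > 0" using pos Rgt by simp
  define c where "c = G R * (m^3* rho/(2* C)) / 2"
  have GRp: "G R > 0" using GR PR by linarith
  have cpos: "c > 0" unfolding c_def using GRp m rho Cpos by (intro divide_pos_pos mult_pos_pos) auto
  show ?thesis
  proof (intro exI conjI allI impI)
    show "R > rho" by (rule Rgt)
    show "c > 0" by (rule cpos)
    fix t assume t: "t \<ge> R"
    have ft: "B t \<ge> 1 \<and> \<bar>Lam t\<bar> \<le> P t \<and> 1 / B t \<ge> m^3* rho/(2* C* t)" using facts[OF t] by blast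
    hence B1: "B t \<ge> 1" and Lb: "\<bar>Lam t\<bar> \<le> P t" and ib: "1 / B t \<ge> m^3* rho/(2* C* t)" by blast+
    have tpos: "t > 0" using t Rgt rho by simp
    have "G t = (B t - 1) * (P t - Lam t) + P t" unfolding G_def by (simp add: algebra_simps)
    also have "... \<le> (B t - 1) * (2 * P t) + P t"
      using B1 Lb by (intro add_right_mono mult_left_mono) auto
    also have "... \<le> 2 * B t * P t" using B1 Lb by (simp add: algebra_simps)
    finally have "G R \<le> 2 * B t * P t" using Gmono[OF t] by simp
    hence "G R / (2 * B t) \<le> P t" using B1 by (simp add: field_simps)
    moreover have "G R / (2 * B t) = G R * (1 / B t) / 2" by simp
    moreover have "G R * (1 / B t) / 2 \<ge> G R * (m^3* rho/(2* C* t)) / 2"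
      using ib GR PR by (intro divide_right_mono mult_left_mono) auto
    moreover have "G R * (m^3* rho/(2* C* t)) / 2 = c / t" unfolding c_def using tpos by simp
    ultimately show "P t \<ge> c / t" by linarith
  qed
qed


lemma gronwall:
  fixes g g' :: "real \<Rightarrow> real" and a b C :: real
  assumes ab: "a \<le> b"
    and d: "\<And>t. a \<le> t \<Longrightarrow> t \<le> b \<Longrightarrow> (g has_real_derivative g' t) (at t)"
    and bd: "\<And>t. a \<le> t \<Longrightarrow> t \<le> b \<Longrightarrow> \<bar>g' t\<bar> \<le> C * g t"
  shows "g b \<ge> g a * exp (-C*(b-a))" and "g a \<ge> g b * exp (-C*(b-a))"
proof -
  have "g a * exp (C* a) \<le> g b * exp (C* b)"
  proof (rule DERIV_nonneg_imp_nondecreasing[OF ab])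
    fix t assume t: "a \<le> t" "t \<le> b"
    have "((\<lambda>t. g t * exp (C* t)) has_real_derivative g' t * exp (C* t) + g t * (exp (C* t) * C)) (at t)"
      by (auto intro!: derivative_eq_intros d t)
    moreover have "g' t * exp (C* t) + g t * (exp (C* t) * C) = (g' t + C * g t) * exp (C* t)"
      by (simp add: algebra_simps)
    moreover have "g' t + C * g t \<ge> 0" using bd[OF t] by linarith
    ultimately show "\<exists>y. ((\<lambda>t. g t * exp (C* t)) has_real_derivative y) (at t) \<and> 0 \<le> y"
      by (metis exp_ge_zero mult_nonneg_nonneg)
  qed
  hence "g a * exp (C* a) * exp (-C* b) \<le> g b * exp (C* b) * exp (-C* b)"
    by (intro mult_right_mono) auto
  moreover have "g a * exp (C* a) * exp (-C* b) = g a * exp (-C*(b-a))"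
    by (simp add: algebra_simps flip: exp_add)
  moreover have "g b * exp (C* b) * exp (-C* b) = g b"
    by (simp flip: exp_add)
  ultimately show "g b \<ge> g a * exp (-C*(b-a))" by linarith
  have "g b * exp (-C* b) \<le> g a * exp (-C* a)"
  proof -
    have "(\<lambda>t. - (g t * exp (-C* t))) a \<le> (\<lambda>t. - (g t * exp (-C* t))) b"
    proof (rule DERIV_nonneg_imp_nondecreasing[OF ab])
      fix t assume t: "a \<le> t" "t \<le> b"
      have "((\<lambda>t. - (g t * exp (-C* t))) has_real_derivative - (g' t * exp (-C* t) + g t * (exp (-C* t) * (-C)))) (at t)"
        by (auto intro!: derivative_eq_intros d t)
      moreover have "- (g' t * exp (-C* t) + g t * (exp (-C* t) * (-C))) = (C * g t - g' t) * exp (-C* t)"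
        by (simp add: algebra_simps)
      moreover have "C * g t - g' t \<ge> 0" using bd[OF t] by linarith
      ultimately show "\<exists>y. ((\<lambda>t. - (g t * exp (-C* t))) has_real_derivative y) (at t) \<and> 0 \<le> y"
        by (metis exp_ge_zero mult_nonneg_nonneg)
    qed
    thus ?thesis by simp
  qed
  hence "g b * exp (-C* b) * exp (C* a) \<le> g a * exp (-C* a) * exp (C* a)"
    by (intro mult_right_mono) auto
  moreover have "g b * exp (-C* b) * exp (C* a) = g b * exp (-C*(b-a))"
    by (simp add: algebra_simps flip: exp_add)
  moreover have "g a * exp (-C* a) * exp (C* a) = g a"
    by (simp flip: exp_add)
  ultimately show "g a \<ge> g b * exp (-C*(b-a))" by linarith
qed



lemma half_bound:
  fixes x y P :: real
  assumes "x^2 + y^2 \<le> P^2/4" "P \<ge> 0"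
  shows "\<bar>x\<bar> \<le> P/2" "\<bar>y\<bar> \<le> P/2"
proof -
  have e: "(P / 2)^2 = P^2/4" by (simp add: power_divide)
  have "x^2 \<ge> 0" "y^2 \<ge> 0" by simp_all
  hence "x^2 \<le> (P/2)^2" "y^2 \<le> (P/2)^2" using assms(1) unfolding e by linarith+
  thus "\<bar>x\<bar> \<le> P/2" "\<bar>y\<bar> \<le> P/2"
    using assms(2) power2_le_imp_le[of "\<bar>x\<bar>" "P/2"] power2_le_imp_le[of "\<bar>y\<bar>" "P/2"] by simp_all
qed

lemma absK: "(d::real) > 0 \<Longrightarrow> \<bar>4 * K / d\<bar> = 4 * \<bar>K\<bar> / d"
  by (simp add: abs_divide abs_mult)

lemma alg4: "4 * (A * (p / 2)) / d = 2 * A / d * (p::real)"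
  by (simp add: field_simps)

lemma pos_all:
  fixes x y P :: "real \<Rightarrow> real" and m lam rho rq t :: real
  assumes m: "m > 0" and rho: "rho \<ge> 0"
  and dP: "\<And>t. t > rho \<Longrightarrow> (P has_real_derivative 4 * (m * t * y t + lam * x t)/(t-rho)) (at t)"
  and cone: "\<And>t. t > rho \<Longrightarrow> (x t)^2 + (y t)^2 \<le> (P t)^2/4"
  and nn: "\<And>t. P t \<ge> 0"
  and rq: "rq > rho" "P rq > 0" and t: "t > rho"
  shows "P t > 0"
proof -
  define a0 where "a0 = min t rq"
  define b0 where "b0 = max t rq"
  have ab: "a0 \<le> b0" unfolding a0_def b0_def by simp
  have a0r: "a0 > rho" unfolding a0_def using t rq by simp
  define C where "C = 2 * (m * b0 + \<bar>lam\<bar>)/(a0 - rho)"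
  have bd: "\<bar>4 * (m * s * y s + lam * x s)/(s-rho)\<bar> \<le> C * P s" if s: "a0 \<le> s" "s \<le> b0" for s
  proof -
    have sr: "s > rho" using s a0r by simp
    have sp: "s \<ge> 0" using sr rho by simp
    have xb: "\<bar>x s\<bar> \<le> P s/2" and yb: "\<bar>y s\<bar> \<le> P s/2" using half_bound[OF cone[OF sr] nn[of s]] by auto
    have "\<bar>m * s * y s + lam * x s\<bar> \<le> (m * s) * \<bar>y s\<bar> + \<bar>lam\<bar> * \<bar>x s\<bar>"
      using m sp by (simp add: abs_mult abs_triangle_ineq [THEN order_trans])
    also have "... \<le> (m * b0) * (P s/2) + \<bar>lam\<bar> * (P s/2)"
      using xb yb m sp s nn[of s] by (intro add_mono mult_mono) auto
    finally have k: "\<bar>m * s * y s + lam * x s\<bar> \<le> (m * b0 + \<bar>lam\<bar>) * (P s / 2)"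
      by (simp add: distrib_right)
    have "\<bar>4 * (m * s * y s + lam * x s)/(s-rho)\<bar> = 4 * \<bar>m * s * y s + lam * x s\<bar>/(s-rho)"
      using absK[of "s-rho" "m * s * y s + lam * x s"] sr by simp
    also have "... \<le> 4 * ((m * b0 + \<bar>lam\<bar>) * (P s / 2))/(a0-rho)"
      using k sr s a0r nn[of s] m rho by (intro frac_le mult_left_mono) (auto intro!: mult_nonneg_nonneg add_nonneg_nonneg)
    also have "... = C * P s" unfolding C_def by (rule alg4)
    finally show ?thesis .
  qed
  have d: "(P has_real_derivative 4 * (m * s * y s + lam * x s)/(s-rho)) (at s)" if s: "a0 \<le> s" "s \<le> b0" for s
    using dP[of s] s a0r by simp
  from gronwall[of a0 b0 P "\<lambda>s. 4 * (m * s * y s + lam * x s)/(s-rho)" C, OF ab d bd]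
  have g1: "P b0 \<ge> P a0 * exp (- C * (b0 - a0))" and g2: "P a0 \<ge> P b0 * exp (- C * (b0 - a0))" by auto
  show ?thesis
  proof (cases "t \<le> rq")
    case True
    hence "a0 = t" "b0 = rq" unfolding a0_def b0_def by auto
    moreover have "P rq * exp (- C * (b0 - a0)) > 0" using rq by simp
    ultimately show ?thesis using g2 by simp
  next
    case False
    hence "a0 = rq" "b0 = t" unfolding a0_def b0_def by auto
    moreover have "P rq * exp (- C * (b0 - a0)) > 0" using rq by simp
    ultimately show ?thesis using g1 by simp
  qed
qed


lemma horizon_deriv:
  fixes x y P :: "real \<Rightarrow> real" and m lam om kap rho t :: real
  assumes t: "t > rho" and Vt: "om*(t^2+rho^2)+kap \<noteq> 0"
  and dx: "(x has_real_derivative (-2*((om*(t^2+rho^2)+kap)/(t-rho))* y t + lam* P t)/(t-rho)) (at t)"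
  and dy: "(y has_real_derivative (2*((om*(t^2+rho^2)+kap)/(t-rho))* x t + m* t* P t)/(t-rho)) (at t)"
  and dP: "(P has_real_derivative 4*(m* t* y t + lam* x t)/(t-rho)) (at t)"
  shows "((\<lambda>s. P s + 2*(s-rho)/(om*(s^2+rho^2)+kap) * (m* s* x s - lam* y s)) has_real_derivative
     (2*(om*(t^2+rho^2)+kap) - 2*(t-rho)*(2* om* t))/(om*(t^2+rho^2)+kap)^2 * (m* t* x t - lam* y t)
     + 2*(t-rho)/(om*(t^2+rho^2)+kap) * m * x t) (at t)"
proof -
  define V where "V = om*(t^2+rho^2)+kap"
  define d where "d = t - rho"
  have dpos: "d > 0" using t d_def by simp
  define X where "X = (-2*(V/d)* y t + lam* P t)/d"
  define Y where "Y = (2*(V/d)* x t + m* t* P t)/d"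
  have dV: "((\<lambda>s. om*(s^2+rho^2)+kap) has_real_derivative 2* om* t) (at t)"
    by (auto intro!: derivative_eq_intros simp: power2_eq_square)
  have dphi: "((\<lambda>s. 2*(s-rho)/(om*(s^2+rho^2)+kap)) has_real_derivative
      (2* V - 2*(t-rho)*(2* om* t))/(V* V)) (at t)"
    using Vt unfolding V_def
    by (auto intro!: derivative_eq_intros dV simp: power2_eq_square)
  have dL: "((\<lambda>s. m* s* x s - lam* y s) has_real_derivative m* x t + m* t* X - lam* Y) (at t)"
    using dx dy unfolding X_def Y_def V_def d_def
    by (auto intro!: derivative_eq_intros simp: algebra_simps)
  have dG: "((\<lambda>s. P s + 2*(s-rho)/(om*(s^2+rho^2)+kap) * (m* s* x s - lam* y s)) has_real_derivative
     4*(m* t* y t + lam* x t)/d + ((2* V - 2*(t-rho)*(2* om* t))/(V* V) * (m* t* x t - lam* y t)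
       + 2*(t-rho)/V * (m* x t + m* t* X - lam* Y))) (at t)"
    by (rule DERIV_cong[OF DERIV_add[OF dP[folded d_def] DERIV_mult[OF dphi dL]]]) (simp add: V_def)
  have key: "m* t* X - lam* Y = -2* V*(m* t* y t + lam* x t)/(d* d)"
    unfolding X_def Y_def using dpos by (simp add: field_simps)
  have e: "4*(m* t* y t + lam* x t)/d + ((2* V - 2*(t-rho)*(2* om* t))/(V* V) * (m* t* x t - lam* y t)
       + 2*(t-rho)/V * (m* x t + m* t* X - lam* Y))
     = (2* V - 2*(t-rho)*(2* om* t))/(V* V) * (m* t* x t - lam* y t) + 2*(t-rho)/V * m * x t"
  proof -
    have "2*(t-rho)/V * (m* x t + m* t* X - lam* Y) = 2*(t-rho)/V * m * x t + 2* d/V * (m* t* X - lam* Y)"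
    proof -
      have "\<And>c. c * (m * x t + m * t * X - lam * Y) = c * m * x t + c * (m * t * X - lam * Y)"
        by (simp add: algebra_simps)
      thus ?thesis unfolding d_def by blast
    qed
    also have "2* d/V * (m* t* X - lam* Y) = - 4*(m* t* y t + lam* x t)/d"
      unfolding key using dpos Vt[folded V_def] by (simp add: field_simps)
    finally have h1: "2*(t-rho)/V * (m* x t + m* t* X - lam* Y) = 2*(t-rho)/V * m * x t + - 4*(m* t* y t + lam* x t)/d" .
    show ?thesis unfolding h1 by linarith
  qed
  show ?thesis using dG[unfolded e] unfolding V_def by (simp add: power2_eq_square)
qed


lemma horizon_core:
  fixes x y P :: "real \<Rightarrow> real" and m lam om kap rho :: real
  assumes m: "m > 0" and rho: "rho > 0" and V0: "om * (rho^2+rho^2)+kap \<noteq> 0"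
  and dx: "\<And>t. t > rho \<Longrightarrow> (x has_real_derivative (-2*((om * (t^2+rho^2)+kap)/(t-rho))* y t + lam * P t)/(t-rho)) (at t)"
  and dy: "\<And>t. t > rho \<Longrightarrow> (y has_real_derivative (2*((om * (t^2+rho^2)+kap)/(t-rho))* x t + m * t * P t)/(t-rho)) (at t)"
  and dP: "\<And>t. t > rho \<Longrightarrow> (P has_real_derivative 4*(m * t * y t + lam * x t)/(t-rho)) (at t)"
  and cone: "\<And>t. t > rho \<Longrightarrow> (x t)^2 + (y t)^2 \<le> (P t)^2/4"
  and pos: "\<And>t. t > rho \<Longrightarrow> P t > 0"
  shows "\<exists>eta c. eta > 0 \<and> c > 0 \<and> (\<forall>t. rho < t \<and> t \<le> rho + eta \<longrightarrow> P t \<ge> c)"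
proof -
  define V where "V = (\<lambda>t. om * (t^2+rho^2)+kap)"
  define v0 where "v0 = \<bar>V rho\<bar>/2"
  have v0: "v0 > 0" unfolding v0_def V_def using V0 by simp
  define S1 where "S1 = m * (rho+1) + \<bar>lam\<bar>"
  have S1: "S1 \<ge> 0" unfolding S1_def using m rho by simp
  define V1 where "V1 = \<bar>V rho\<bar> + \<bar>om\<bar> * (2* rho+1)"
  define eta where "eta = min 1 (min (v0/(\<bar>om\<bar> * (2* rho+1)+1)) (v0/(2* S1+1)))"
  have q1: "\<bar>om\<bar> * (2* rho+1)+1 > 0" using rho by (simp add: add_nonneg_pos)
  have q2: "2* S1+1 > 0" using S1 by simp
  have eta: "eta > 0" unfolding eta_def using v0 q1 q2 by simp
  have eta1: "eta \<le> 1" unfolding eta_def by simp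
  have eta2: "eta * (\<bar>om\<bar> * (2* rho+1)+1) \<le> v0"
  proof -
    have "eta \<le> v0/(\<bar>om\<bar> * (2* rho+1)+1)" unfolding eta_def by simp
    thus ?thesis using q1 by (simp add: field_simps)
  qed
  have eta3: "eta * (2* S1+1) \<le> v0"
  proof -
    have "eta \<le> v0/(2* S1+1)" unfolding eta_def by simp
    thus ?thesis using q2 by (simp add: field_simps)
  qed
  have Vbd: "\<bar>V t\<bar> \<ge> v0 \<and> \<bar>V t\<bar> \<le> V1" if t: "rho \<le> t" "t \<le> rho + eta" for t
  proof -
    have "V t - V rho = om * ((t - rho) * (t + rho))" unfolding V_def by (simp add: algebra_simps power2_eq_square)
    hence "\<bar>V t - V rho\<bar> = \<bar>om\<bar> * ((t - rho) * (t + rho))" using t rho by (simp add: abs_mult)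
    also have "... \<le> \<bar>om\<bar> * (eta * (2* rho+1))"
      using t rho eta1 by (intro mult_left_mono mult_mono) auto
    finally have a: "\<bar>V t - V rho\<bar> \<le> \<bar>om\<bar> * (eta * (2* rho+1))" .
    have b: "\<bar>om\<bar> * (eta * (2* rho+1)) < v0" using eta2 eta by (simp add: algebra_simps)
    have c: "\<bar>om\<bar> * (eta * (2* rho+1)) \<le> \<bar>om\<bar> * (2* rho+1)"
      using eta1 rho by (intro mult_left_mono) (auto simp: mult_le_cancel_right1)
    show ?thesis using a b c unfolding v0_def V1_def by linarith
  qed
  define L where "L = (\<lambda>t. m * t * x t - lam * y t)"
  define phi where "phi = (\<lambda>t. 2*(t-rho)/V t)"
  define Gh where "Gh = (\<lambda>t. P t + phi t * L t)"
  define D1 where "D1 = (2* V1 + 4*\<bar>om\<bar> * (rho+1))/v0^2"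
  define C1 where "C1 = D1 * S1 + 2* m/v0"
  have D1: "D1 \<ge> 0" unfolding D1_def V1_def using rho v0
    by (intro divide_nonneg_pos add_nonneg_nonneg mult_nonneg_nonneg) auto
  have C1: "C1 \<ge> 0" unfolding C1_def using D1 S1 m v0
    by (intro add_nonneg_nonneg mult_nonneg_nonneg divide_nonneg_pos) auto
  have facts: "(Gh has_real_derivative (2* V t - 2*(t-rho)*(2* om * t))/(V t)^2 * L t + phi t * m * x t) (at t)
     \<and> \<bar>(2* V t - 2*(t-rho)*(2* om * t))/(V t)^2 * L t + phi t * m * x t\<bar> \<le> C1 * Gh t
     \<and> P t \<le> 2 * Gh t \<and> 2 * Gh t \<le> 3 * P t"
    if t: "rho < t" "t \<le> rho + eta" for t
  proof -
    have Vt: "\<bar>V t\<bar> \<ge> v0" "\<bar>V t\<bar> \<le> V1" using Vbd[of t] t by auto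
    have Vne: "V t \<noteq> 0" using Vt v0 by auto
    have d: "(Gh has_real_derivative (2* V t - 2*(t-rho)*(2* om * t))/(V t)^2 * L t + phi t * m * x t) (at t)"
      using horizon_deriv[where x=x and y=y and P=P and m=m and lam=lam and om=om and kap=kap and rho=rho and t=t,
          OF t(1) Vne[unfolded V_def] dx[OF t(1)] dy[OF t(1)] dP[OF t(1)]]
      unfolding Gh_def phi_def L_def V_def by simp
    have Pp: "P t > 0" using pos t by simp
    have xb: "\<bar>x t\<bar> \<le> P t / 2"
    proof -
      have e: "(P t / 2)^2 = (P t)^2/4" by (simp add: power_divide)
      have "(y t)^2 \<ge> 0" by simp
      hence "(x t)^2 \<le> (P t / 2)^2" using cone[OF t(1)] unfolding e by linarith
      thus ?thesis using Pp power2_le_imp_le[of "\<bar>x t\<bar>" "P t / 2"] by simp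
    qed
    have yb: "\<bar>y t\<bar> \<le> P t / 2"
    proof -
      have e: "(P t / 2)^2 = (P t)^2/4" by (simp add: power_divide)
      have "(x t)^2 \<ge> 0" by simp
      hence "(y t)^2 \<le> (P t / 2)^2" using cone[OF t(1)] unfolding e by linarith
      thus ?thesis using Pp power2_le_imp_le[of "\<bar>y t\<bar>" "P t / 2"] by simp
    qed
    have tpos: "t > 0" using t rho by simp
    have t1: "t \<le> rho + 1" using t eta1 by simp
    have Lb: "\<bar>L t\<bar> \<le> S1 * (P t / 2)"
    proof -
      have tri: "\<bar>L t\<bar> \<le> \<bar>m * t * x t\<bar> + \<bar>lam * y t\<bar>" unfolding L_def by linarith
      have "\<bar>m * t * x t\<bar> = (m * t) * \<bar>x t\<bar>" using m tpos by (simp add: abs_mult)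
      also have "... \<le> (m * (rho+1)) * (P t / 2)" using xb m tpos t1 by (intro mult_mono) auto
      finally have a: "\<bar>m * t * x t\<bar> \<le> (m * (rho+1)) * (P t / 2)" .
      have b: "\<bar>lam * y t\<bar> \<le> \<bar>lam\<bar> * (P t / 2)" unfolding abs_mult using yb by (intro mult_left_mono) auto
      have "\<bar>L t\<bar> \<le> (m * (rho+1)) * (P t / 2) + \<bar>lam\<bar> * (P t / 2)" using tri a b by linarith
      moreover have "S1 * (P t / 2) = (m * (rho+1)) * (P t / 2) + \<bar>lam\<bar> * (P t / 2)"
        unfolding S1_def by (simp only: distrib_right)
      ultimately show ?thesis by linarith
    qed
    have phib: "\<bar>phi t\<bar> \<le> 2* eta/v0"
    proof -
      have "\<bar>phi t\<bar> = 2*(t-rho)/\<bar>V t\<bar>" unfolding phi_def using t by (simp add: abs_divide)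
      also have "... \<le> 2* eta/v0" using t Vt v0 by (intro frac_le) auto
      finally show ?thesis .
    qed
    have phiS: "\<bar>phi t\<bar> * S1 \<le> 1"
    proof -
      have "\<bar>phi t\<bar> * S1 \<le> 2* eta/v0 * S1" using phib S1 by (intro mult_right_mono) auto
      also have "... \<le> 1" using eta3 eta v0 S1 by (simp add: field_simps)
      finally show ?thesis .
    qed
    have phi2: "\<bar>phi t\<bar> \<le> 2/v0"
    proof -
      have "2* eta/v0 \<le> 2/v0" using eta1 v0 by (simp add: divide_right_mono)
      thus ?thesis using phib by linarith
    qed
    have dphib: "\<bar>(2* V t - 2*(t-rho)*(2* om * t))/(V t)^2\<bar> \<le> D1"
    proof -
      have a1: "\<bar>2*(t-rho)*(2* om * t)\<bar> = 4*\<bar>om\<bar> * (t * (t-rho))"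
      proof -
        have e: "2*(t-rho)*(2* om * t) = om * (4*(t*(t-rho)))" by (simp add: algebra_simps)
        have nn: "4*(t*(t-rho)) \<ge> 0" using t tpos by simp
        have "\<bar>2*(t-rho)*(2* om * t)\<bar> = \<bar>om\<bar> * (4*(t*(t-rho)))"
          by (simp only: e abs_mult[of om "4*(t*(t-rho))"] abs_of_nonneg[OF nn])
        thus ?thesis by simp
      qed
      have "\<bar>2* V t - 2*(t-rho)*(2* om * t)\<bar> \<le> \<bar>2* V t\<bar> + \<bar>2*(t-rho)*(2* om * t)\<bar>"
        by (rule abs_triangle_ineq4)
      also have "... = 2*\<bar>V t\<bar> + 4*\<bar>om\<bar> * (t * (t-rho))" using a1 by simp
      also have "... \<le> 2* V1 + 4*\<bar>om\<bar> * ((rho+1) * 1)"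
        using Vt t1 t eta1 tpos by (intro add_mono mult_left_mono mult_mono) auto
      finally have num: "\<bar>2* V t - 2*(t-rho)*(2* om * t)\<bar> \<le> D1 * v0^2"
        unfolding D1_def using v0 by simp
      have den: "(V t)^2 \<ge> v0^2" using Vt v0 by (metis abs_ge_zero less_imp_le power2_abs power_mono)
      have "\<bar>(2* V t - 2*(t-rho)*(2* om * t))/(V t)^2\<bar> = \<bar>2* V t - 2*(t-rho)*(2* om * t)\<bar>/(V t)^2"
        by (simp add: abs_divide)
      also have "... \<le> (D1 * v0^2)/(v0^2)" using num den v0 D1 by (intro frac_le) auto
      also have "... = D1" using v0 by simp
      finally show ?thesis .
    qed
    have pl: "\<bar>phi t * L t\<bar> \<le> P t / 2"
    proof -
      have "\<bar>phi t * L t\<bar> = \<bar>phi t\<bar> * \<bar>L t\<bar>" by (simp add: abs_mult)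
      also have "... \<le> \<bar>phi t\<bar> * (S1 * (P t / 2))" using Lb by (intro mult_left_mono) auto
      also have "... = (\<bar>phi t\<bar> * S1) * (P t / 2)" by simp
      also have "... \<le> 1 * (P t / 2)" using phiS Pp by (intro mult_right_mono) auto
      finally show ?thesis by simp
    qed
    have Gl: "P t \<le> 2 * Gh t" unfolding Gh_def using pl by (auto simp: abs_le_iff)
    have Gu: "2 * Gh t \<le> 3 * P t" unfolding Gh_def using pl by (auto simp: abs_le_iff)
    have derb: "\<bar>(2 * V t - 2 * (t-rho) * (2 * om * t))/(V t)^2 * L t + phi t * m * x t\<bar> \<le> C1 * Gh t"
    proof -
      have "\<bar>(2 * V t - 2 * (t-rho) * (2 * om * t))/(V t)^2 * L t + phi t * m * x t\<bar>
          \<le> \<bar>(2 * V t - 2 * (t-rho) * (2 * om * t))/(V t)^2\<bar> * \<bar>L t\<bar> + \<bar>phi t\<bar> * (m * \<bar>x t\<bar>)"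
        using m by (simp add: abs_mult abs_triangle_ineq [THEN order_trans])
      also have "... \<le> D1 * (S1 * (P t / 2)) + (2 / v0) * (m * (P t / 2))"
        using dphib Lb phi2 xb m D1 v0 by (intro add_mono mult_mono) auto
      also have "... = C1 * (P t / 2)" unfolding C1_def by (simp add: algebra_simps)
      also have "... \<le> C1 * Gh t" using C1 Gl by (intro mult_left_mono) auto
      finally show ?thesis .
    qed
    show ?thesis using d derb Gl Gu by blast
  qed
  define b where "b = rho + eta"
  have b: "b > rho" unfolding b_def using eta by simp
  have Pb: "P b > 0" using pos b by simp
  define c where "c = P b * exp (- C1 * eta) / 3"
  have c: "c > 0" unfolding c_def using Pb by simp
  show ?thesis
  proof (intro exI conjI allI impI)
    show "eta > 0" by (rule eta)
    show "c > 0" by (rule c)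
    fix t assume t: "rho < t \<and> t \<le> rho + eta"
    have tb: "t \<le> b" using t b_def by simp
    define Gd where "Gd = (\<lambda>s. (2 * V s - 2 * (s-rho) * (2 * om * s))/(V s)^2 * L s + phi s * m * x s)"
    have g: "Gh b \<ge> Gh t * exp (- C1 * (b - t))" and g2: "Gh t \<ge> Gh b * exp (- C1 * (b - t))"
    proof -
      have h: "(Gh has_real_derivative Gd s) (at s) \<and> \<bar>Gd s\<bar> \<le> C1 * Gh s" if s: "t \<le> s" "s \<le> b" for s
        using facts[of s] s t unfolding b_def Gd_def by auto
      show "Gh b \<ge> Gh t * exp (- C1 * (b - t))" "Gh t \<ge> Gh b * exp (- C1 * (b - t))"
        using gronwall[of t b Gh Gd C1] h tb by auto
    qed
    have fb: "P b \<le> 2 * Gh b" using facts[of b] b unfolding b_def by auto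
    have ft: "2 * Gh t \<le> 3 * P t" using facts[of t] t by auto
    have "exp (- C1 * eta) \<le> exp (- C1 * (b - t))" using C1 t unfolding b_def
      by (simp add: mult_left_mono)
    hence "Gh b * exp (- C1 * eta) \<le> Gh b * exp (- C1 * (b - t))"
      using fb Pb by (intro mult_left_mono) auto
    moreover have "P b / 2 * exp (- C1 * eta) \<le> Gh b * exp (- C1 * eta)"
      using fb by (intro mult_right_mono) auto
    ultimately have "P b / 2 * exp (- C1 * eta) \<le> Gh t" using g2 by linarith
    thus "P t \<ge> c" unfolding c_def using ft by simp
  qed
qed


definition xf :: "(real \<Rightarrow> complex) \<Rightarrow> (real \<Rightarrow> complex) \<Rightarrow> real \<Rightarrow> real" where
  "xf f1 f2 t = Re (f1 t) * Re (f2 t) + Im (f1 t) * Im (f2 t)"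
definition yf :: "(real \<Rightarrow> complex) \<Rightarrow> (real \<Rightarrow> complex) \<Rightarrow> real \<Rightarrow> real" where
  "yf f1 f2 t = Re (f1 t) * Im (f2 t) - Im (f1 t) * Re (f2 t)"
definition Pf :: "(real \<Rightarrow> complex) \<Rightarrow> (real \<Rightarrow> complex) \<Rightarrow> real \<Rightarrow> real" where
  "Pf f1 f2 t = cmod (f1 t)^2 + cmod (f2 t)^2"

lemma Pf_alt: "Pf f1 f2 = (\<lambda>t. Re (f1 t)^2 + Im (f1 t)^2 + Re (f2 t)^2 + Im (f2 t)^2)"
  unfolding Pf_def by (rule ext) (simp add: cmod_power2)

lemma real_system:
  fixes f1 f2 :: "real \<Rightarrow> complex"
  assumes rs: "radial_solution M a Q m e k \<omega> lam f1 f2" and r: "r > M"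
  defines "U \<equiv> Vpot a Q e k \<omega> r / (r - M)"
  shows "(xf f1 f2 has_real_derivative (-2 * U * yf f1 f2 r + lam * Pf f1 f2 r)/(r-M)) (at r)"
    and "(yf f1 f2 has_real_derivative (2 * U * xf f1 f2 r + m * r * Pf f1 f2 r)/(r-M)) (at r)"
    and "(Pf f1 f2 has_real_derivative 4 * (m * r * yf f1 f2 r + lam * xf f1 f2 r)/(r-M)) (at r)"
proof -
  have rM: "r \<in> {M<..}" using r by simp
  from rs[unfolded radial_solution_def, rule_format, OF rM] obtain d1 d2 where
    h1: "(f1 has_vector_derivative d1) (at r)" and h2: "(f2 has_vector_derivative d2) (at r)"
    and e1: "complex_of_real (r - M) * d1
          + \<i> * complex_of_real (Vpot a Q e k \<omega> r / (r - M)) * f1 r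
          + (\<i> * complex_of_real (m * r) - complex_of_real lam) * f2 r = 0"
    and e2: "(- \<i> * complex_of_real (m * r) - complex_of_real lam) * f1 r
          + complex_of_real (r - M) * d2
          - \<i> * complex_of_real (Vpot a Q e k \<omega> r / (r - M)) * f2 r = 0"
    by blast
  define u1 where "u1 = Re (f1 r)"
  define v1 where "v1 = Im (f1 r)"
  define u2 where "u2 = Re (f2 r)"
  define v2 where "v2 = Im (f2 r)"
  have d: "r - M > 0" using r by simp
  define dd where "dd = r - M"
  have ddp: "dd \<noteq> 0" using d dd_def by simp
  have "Re (complex_of_real (r - M) * d1
          + \<i> * complex_of_real U * f1 r
          + (\<i> * complex_of_real (m * r) - complex_of_real lam) * f2 r) = 0"
    using e1 unfolding U_def by simp
  hence "(r - M) * Re d1 - U * v1 - m * r * v2 - lam * u2 = 0"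
    unfolding u1_def v1_def u2_def v2_def by simp
  hence R1: "Re d1 = (U * v1 + m * r * v2 + lam * u2)/(r - M)" using d by (simp add: field_simps)
  have "Im (complex_of_real (r - M) * d1
          + \<i> * complex_of_real U * f1 r
          + (\<i> * complex_of_real (m * r) - complex_of_real lam) * f2 r) = 0"
    using e1 unfolding U_def by simp
  hence "(r - M) * Im d1 + U * u1 + m * r * u2 - lam * v2 = 0"
    unfolding u1_def v1_def u2_def v2_def by simp
  hence I1: "Im d1 = (- U * u1 - m * r * u2 + lam * v2)/(r - M)" using d by (simp add: field_simps)
  have "Re ((- \<i> * complex_of_real (m * r) - complex_of_real lam) * f1 r
          + complex_of_real (r - M) * d2
          - \<i> * complex_of_real U * f2 r) = 0"
    using e2 unfolding U_def by simp
  hence "m * r * v1 - lam * u1 + (r - M) * Re d2 + U * v2 = 0"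
    unfolding u1_def v1_def u2_def v2_def by simp
  hence R2: "Re d2 = (lam * u1 - m * r * v1 - U * v2)/(r - M)" using d by (simp add: field_simps)
  have "Im ((- \<i> * complex_of_real (m * r) - complex_of_real lam) * f1 r
          + complex_of_real (r - M) * d2
          - \<i> * complex_of_real U * f2 r) = 0"
    using e2 unfolding U_def by simp
  hence "- m * r * u1 - lam * v1 + (r - M) * Im d2 - U * u2 = 0"
    unfolding u1_def v1_def u2_def v2_def by simp
  hence I2: "Im d2 = (m * r * u1 + lam * v1 + U * u2)/(r - M)" using d by (simp add: field_simps)
  have dr1: "((\<lambda>t. Re (f1 t)) has_real_derivative Re d1) (at r)" using h1 by (rule has_field_derivative_Re)
  have di1: "((\<lambda>t. Im (f1 t)) has_real_derivative Im d1) (at r)" using h1 by (rule has_field_derivative_Im)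
  have dr2: "((\<lambda>t. Re (f2 t)) has_real_derivative Re d2) (at r)" using h2 by (rule has_field_derivative_Re)
  have di2: "((\<lambda>t. Im (f2 t)) has_real_derivative Im d2) (at r)" using h2 by (rule has_field_derivative_Im)
  have "(xf f1 f2 has_real_derivative Re d1 * u2 + u1 * Re d2 + (Im d1 * v2 + v1 * Im d2)) (at r)"
    unfolding xf_def[abs_def] u1_def v1_def u2_def v2_def
    by (auto intro!: derivative_eq_intros h1 h2 simp: algebra_simps)
  moreover have "Re d1 * u2 + u1 * Re d2 + (Im d1 * v2 + v1 * Im d2) = (-2 * U * yf f1 f2 r + lam * Pf f1 f2 r)/(r-M)"
    unfolding R1 R2 I1 I2 yf_def Pf_alt u1_def[symmetric] v1_def[symmetric] u2_def[symmetric] v2_def[symmetric]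
    unfolding dd_def[symmetric] using ddp by (simp add: field_simps power2_eq_square)
  ultimately show "(xf f1 f2 has_real_derivative (-2 * U * yf f1 f2 r + lam * Pf f1 f2 r)/(r-M)) (at r)" by simp
  have "(yf f1 f2 has_real_derivative Re d1 * v2 + u1 * Im d2 - (Im d1 * u2 + v1 * Re d2)) (at r)"
    unfolding yf_def[abs_def] u1_def v1_def u2_def v2_def
    by (auto intro!: derivative_eq_intros h1 h2 simp: algebra_simps)
  moreover have "Re d1 * v2 + u1 * Im d2 - (Im d1 * u2 + v1 * Re d2) = (2 * U * xf f1 f2 r + m * r * Pf f1 f2 r)/(r-M)"
    unfolding R1 R2 I1 I2 xf_def Pf_alt u1_def[symmetric] v1_def[symmetric] u2_def[symmetric] v2_def[symmetric]
    unfolding dd_def[symmetric] using ddp by (simp add: field_simps power2_eq_square)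
  ultimately show "(yf f1 f2 has_real_derivative (2 * U * xf f1 f2 r + m * r * Pf f1 f2 r)/(r-M)) (at r)" by simp
  have "(Pf f1 f2 has_real_derivative 2 * u1 * Re d1 + 2 * v1 * Im d1 + 2 * u2 * Re d2 + 2 * v2 * Im d2) (at r)"
    unfolding Pf_alt u1_def v1_def u2_def v2_def
    by (auto intro!: derivative_eq_intros h1 h2 simp: power2_eq_square algebra_simps)
  moreover have "2 * u1 * Re d1 + 2 * v1 * Im d1 + 2 * u2 * Re d2 + 2 * v2 * Im d2 = 4 * (m * r * yf f1 f2 r + lam * xf f1 f2 r)/(r-M)"
    unfolding R1 R2 I1 I2 xf_def yf_def u1_def[symmetric] v1_def[symmetric] u2_def[symmetric] v2_def[symmetric]
    unfolding dd_def[symmetric] using ddp by (simp add: field_simps power2_eq_square)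
  ultimately show "(Pf f1 f2 has_real_derivative 4 * (m * r * yf f1 f2 r + lam * xf f1 f2 r)/(r-M)) (at r)" by simp
qed


lemma int_sub_le:
  fixes F :: "real \<Rightarrow> real"
  assumes int: "F integrable_on {M<..}" and nn: "\<And>r. r > M \<Longrightarrow> F r \<ge> 0"
    and cont: "continuous_on {M<..} F" and al: "M < \<alpha>"
  shows "integral {\<alpha>..\<beta>} F \<le> integral {M<..} F"
proof (rule integral_subset_le)
  show sub: "{\<alpha>..\<beta>} \<subseteq> {M<..}" using al by auto
  show "F integrable_on {\<alpha>..\<beta>}"
    by (rule integrable_continuous_interval) (rule continuous_on_subset[OF cont sub])
  show "F integrable_on {M<..}" by (rule int)
  show "\<forall>x\<in>{M<..}. 0 \<le> F x" using nn by auto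
qed

lemma horizon_contra:
  fixes F :: "real \<Rightarrow> real"
  assumes bound: "\<And>\<alpha> \<beta>. M < \<alpha> \<Longrightarrow> integral {\<alpha>..\<beta>} F \<le> I"
    and cont: "continuous_on {M<..} F"
    and low: "\<And>t. M < t \<Longrightarrow> t \<le> M + eta \<Longrightarrow> F t \<ge> c / (t - M)^2"
    and c: "c > 0" and eta: "eta > 0"
  shows False
proof -
  define eps where "eps = 1 / ((\<bar>I\<bar> + 1)/c + 1/eta)"
  have q: "(\<bar>I\<bar> + 1)/c + 1/eta > 1/eta" using c by (simp add: add_pos_nonneg)
  have q0: "(\<bar>I\<bar> + 1)/c + 1/eta > 0" using c eta by (simp add: add_pos_pos)
  have eps: "eps > 0" unfolding eps_def using q0 by simp
  have qe1: "((\<bar>I\<bar> + 1)/c + 1/eta) * eta = (\<bar>I\<bar> + 1)/c * eta + 1" using eta by (simp add: distrib_right)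
  have qe2: "(\<bar>I\<bar> + 1)/c * eta > 0" using c eta by (simp add: add_pos_nonneg)
  have qe: "((\<bar>I\<bar> + 1)/c + 1/eta) * eta > 1" using qe1 qe2 by linarith
  have epsl: "eps < eta" unfolding eps_def using qe q0 by (simp add: field_simps)
  define al where "al = M + eps"
  define be where "be = M + eta"
  have ab: "al \<le> be" unfolding al_def be_def using epsl by simp
  have hi: "((\<lambda>t. c / (t - M)^2) has_integral ((- c / (be - M)) - (- c / (al - M)))) {al..be}"
  proof (rule fundamental_theorem_of_calculus[OF ab])
    fix t assume t: "t \<in> {al..be}"
    have tM: "t - M > 0" using t eps unfolding al_def by simp
    have "((\<lambda>t. - c / (t - M)) has_real_derivative c / (t - M)^2) (at t)"
      using tM by (auto intro!: derivative_eq_intros simp: power2_eq_square field_simps)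
    thus "((\<lambda>t. - c / (t - M)) has_vector_derivative c / (t - M)^2) (at t within {al..be})"
      by (simp add: has_real_derivative_iff_has_vector_derivative has_vector_derivative_at_within)
  qed
  have val: "(- c / (be - M)) - (- c / (al - M)) = \<bar>I\<bar> + 1"
  proof -
    have a: "(- c / (be - M)) - (- c / (al - M)) = c * (1/eps) - c * (1/eta)" unfolding al_def be_def
      by simp
    have b: "1/eps = (\<bar>I\<bar> + 1)/c + 1/eta" unfolding eps_def by simp
    have "c * ((\<bar>I\<bar> + 1)/c + 1/eta) - c * (1/eta) = c * ((\<bar>I\<bar> + 1)/c)" by (simp add: distrib_left)
    also have "... = \<bar>I\<bar> + 1" using c by simp
    finally show ?thesis unfolding a b .
  qed
  have "integral {al..be} (\<lambda>t. c / (t - M)^2) \<le> integral {al..be} F"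
  proof (rule integral_le)
    show "(\<lambda>t. c / (t - M)^2) integrable_on {al..be}" using hi by blast
    have sub: "{al..be} \<subseteq> {M<..}" unfolding al_def using eps by auto
    show "F integrable_on {al..be}"
      by (rule integrable_continuous_interval) (rule continuous_on_subset[OF cont sub])
    fix t assume t: "t \<in> {al..be}"
    show "c / (t - M)^2 \<le> F t" using low[of t] t eps unfolding al_def be_def by auto
  qed
  moreover have "integral {al..be} (\<lambda>t. c / (t - M)^2) = \<bar>I\<bar> + 1"
    using hi val by (simp add: integral_unique)
  moreover have "integral {al..be} F \<le> I" using bound[of al be] eps unfolding al_def by simp
  ultimately show False by linarith
qed

lemma infinity_contra:
  fixes F :: "real \<Rightarrow> real"
  assumes bound: "\<And>\<alpha> \<beta>. M < \<alpha> \<Longrightarrow> integral {\<alpha>..\<beta>} F \<le> I"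
    and cont: "continuous_on {M<..} F"
    and low: "\<And>t. t \<ge> R \<Longrightarrow> F t \<ge> c / t"
    and c: "c > 0" and R: "R > M" "R > 0"
  shows False
proof -
  define T where "T = R * exp ((\<bar>I\<bar> + 1)/c)"
  have RT: "R \<le> T" unfolding T_def using R c by simp
  have hi: "((\<lambda>t. c / t) has_integral (c * ln T - c * ln R)) {R..T}"
  proof (rule fundamental_theorem_of_calculus[OF RT])
    fix t assume t: "t \<in> {R..T}"
    have tp: "t > 0" using t R by simp
    have "((\<lambda>t. c * ln t) has_real_derivative c / t) (at t)"
      using tp by (auto intro!: derivative_eq_intros simp: field_simps)
    thus "((\<lambda>t. c * ln t) has_vector_derivative c / t) (at t within {R..T})"
      by (simp add: has_real_derivative_iff_has_vector_derivative has_vector_derivative_at_within)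
  qed
  have val: "c * ln T - c * ln R = \<bar>I\<bar> + 1"
  proof -
    have "ln T = ln R + (\<bar>I\<bar> + 1)/c" unfolding T_def using R by (simp add: ln_mult)
    hence "c * ln T - c * ln R = c * ((\<bar>I\<bar> + 1)/c)" by (simp add: algebra_simps)
    thus ?thesis using c by simp
  qed
  have "integral {R..T} (\<lambda>t. c / t) \<le> integral {R..T} F"
  proof (rule integral_le)
    show "(\<lambda>t. c / t) integrable_on {R..T}" using hi by blast
    have sub: "{R..T} \<subseteq> {M<..}" using R by auto
    show "F integrable_on {R..T}"
      by (rule integrable_continuous_interval) (rule continuous_on_subset[OF cont sub])
    fix t assume t: "t \<in> {R..T}"
    show "c / t \<le> F t" using low[of t] t by auto
  qed
  moreover have "integral {R..T} (\<lambda>t. c / t) = \<bar>I\<bar> + 1"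
    using hi val by (simp add: integral_unique)
  moreover have "integral {R..T} F \<le> I" using bound[of R T] R by simp
  ultimately show False by linarith
qed

lemma neg_div: "- A = B \<Longrightarrow> - (A / (d::real)) = B / d"
  by (metis minus_divide_left)

lemma cone_xyP:
  fixes f1 f2 :: "real \<Rightarrow> complex"
  shows "(xf f1 f2 t)^2 + (yf f1 f2 t)^2 \<le> (Pf f1 f2 t)^2/4"
proof -
  define u1 where "u1 = Re (f1 t)"
  define v1 where "v1 = Im (f1 t)"
  define u2 where "u2 = Re (f2 t)"
  define v2 where "v2 = Im (f2 t)"
  define A where "A = u1^2 + v1^2"
  define B where "B = u2^2 + v2^2"
  have e1: "(xf f1 f2 t)^2 + (yf f1 f2 t)^2 = A * B"
    unfolding xf_def yf_def A_def B_def u1_def[symmetric] v1_def[symmetric] u2_def[symmetric] v2_def[symmetric]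
    by (simp add: algebra_simps power2_eq_square)
  have e2: "Pf f1 f2 t = A + B"
    unfolding Pf_alt A_def B_def u1_def v1_def u2_def v2_def by simp
  have "(A + B)^2/4 - A * B = (A - B)^2/4" by (simp add: algebra_simps power2_eq_square)
  moreover have "(A - B)^2/4 \<ge> 0" by simp
  ultimately show ?thesis unfolding e1 e2 by linarith
qed

lemma Pf_nonneg: "Pf f1 f2 t \<ge> 0"
  unfolding Pf_def by simp

theorem mainTheorem9:
  fixes M a Q m e k \<omega> :: real
  assumes "M > 0" and "M\<^sup>2 = a\<^sup>2 + Q\<^sup>2"
    and "Q = 0" and "M = \<bar>a\<bar>"
    and "m > 0"
    and "half_integer k"
    and "energy_eigenvalue M a Q m e k \<omega>"
  shows "M * m > 1/4"
proof (rule ccontr)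
  assume "\<not> M * m > 1/4"
  hence Mm: "M * m \<le> 1/4" by simp
  have M: "M > 0" and m: "m > 0" and Q0: "Q = 0" using assms by auto
  have aM: "a^2 = M^2" using assms(4) by simp
  have a0: "a \<noteq> 0" using assms(1,4) by auto
  from assms(7) obtain lam f1 f2 g1 g2 where rs: "radial_solution M a Q m e k \<omega> lam f1 f2"
    and nt: "\<exists>r\<in>{M<..}. f1 r \<noteq> 0 \<or> f2 r \<noteq> 0"
    and int: "(\<lambda>r. (cmod (f1 r)^2 + cmod (f2 r)^2) * (r^2 + a^2) / (r - M)^2) integrable_on {M<..}"
    unfolding energy_eigenvalue_def by blast
  define x where "x = xf f1 f2"
  define y where "y = yf f1 f2"
  define P where "P = Pf f1 f2"
  have Vp: "\<And>t. Vpot a Q e k \<omega> t = \<omega> * (t^2+M^2) + k * a"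
    unfolding Vpot_def using Q0 aM by simp
  have dx: "(x has_real_derivative (-2*((\<omega> * (t^2+M^2) + k * a)/(t-M))* y t + lam * P t)/(t-M)) (at t)"
    if t: "t > M" for t
    using real_system(1)[OF rs t] unfolding x_def y_def P_def Vp by simp
  have dy: "(y has_real_derivative (2*((\<omega> * (t^2+M^2) + k * a)/(t-M))* x t + m * t * P t)/(t-M)) (at t)"
    if t: "t > M" for t
    using real_system(2)[OF rs t] unfolding x_def y_def P_def Vp by simp
  have dP: "(P has_real_derivative 4 * (m * t * y t + lam * x t)/(t-M)) (at t)"
    if t: "t > M" for t
    using real_system(3)[OF rs t] unfolding x_def y_def P_def by simp
  have cone: "(x t)^2 + (y t)^2 \<le> (P t)^2/4" for t
    unfolding x_def y_def P_def by (rule cone_xyP)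
  have nn: "P t \<ge> 0" for t unfolding P_def by (rule Pf_nonneg)
  from nt obtain r0 where r0: "r0 > M" "f1 r0 \<noteq> 0 \<or> f2 r0 \<noteq> 0" by auto
  have Pr0: "P r0 > 0"
  proof -
    have "cmod (f1 r0)^2 > 0 \<or> cmod (f2 r0)^2 > 0" using r0(2) by auto
    moreover have "cmod (f1 r0)^2 \<ge> 0" "cmod (f2 r0)^2 \<ge> 0" by simp_all
    ultimately show ?thesis unfolding P_def Pf_def by linarith
  qed
  have pos: "P t > 0" if t: "t > M" for t
    using pos_all[where x=x and y=y and P=P and m=m and lam=lam and rho=M and rq=r0 and t=t,
        OF m less_imp_le[OF M] dP cone nn r0(1) Pr0 t] by simp
  define F where "F = (\<lambda>r. (cmod (f1 r)^2 + cmod (f2 r)^2) * (r^2 + a^2) / (r - M)^2)"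
  have FP: "F r = P r * ((r^2 + M^2) / (r - M)^2)" for r
    unfolding F_def P_def Pf_def aM by simp
  have Fnn: "F r \<ge> 0" for r unfolding FP using nn[of r] by simp
  have cont: "continuous_on {M<..} F"
  proof (rule continuous_at_imp_continuous_on, rule ballI)
    fix t assume "t \<in> {M<..}"
    hence t: "t > M" by simp
    have "isCont P t" using dP[OF t] by (rule DERIV_isCont)
    moreover have "t - M \<noteq> 0" using t by simp
    ultimately have "isCont (\<lambda>r. P r * ((r^2 + M^2) / (r - M)^2)) t"
      by (intro continuous_intros) auto
    thus "isCont F t" unfolding FP[abs_def] .
  qed
  have intF: "F integrable_on {M<..}" using int unfolding F_def .
  define I where "I = integral {M<..} F"
  have bound: "integral {\<alpha>..\<beta>} F \<le> I" if "M < \<alpha>" for \<alpha> \<beta>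
    unfolding I_def using int_sub_le[OF intF Fnn cont that] .
  show False
  proof (cases "\<omega> * (M^2+M^2) + k * a = 0")
    case False
    obtain eta c where eta: "eta > 0" and c: "c > 0"
      and low: "\<And>t. M < t \<and> t \<le> M + eta \<longrightarrow> P t \<ge> c"
      using horizon_core[where x=x and y=y and P=P and m=m and lam=lam and om=\<omega> and kap="k * a" and rho=M,
          OF m M False dx dy dP cone pos] by blast
    have lowF: "F t \<ge> (c * M^2) / (t - M)^2" if t: "M < t" "t \<le> M + eta" for t
    proof -
      have Pt: "P t \<ge> c" using low t by blast
      have "c * M^2 \<le> P t * (t^2 + M^2)" using Pt c by (intro mult_mono) auto
      hence "(c * M^2) / (t - M)^2 \<le> P t * (t^2 + M^2) / (t - M)^2"
        by (intro divide_right_mono) auto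
      thus ?thesis unfolding FP by simp
    qed
    show False using horizon_contra[OF bound cont lowF] c M eta by simp
  next
    case True
    have ka: "k * a = - 2 * \<omega> * M^2" using True by (simp add: algebra_simps)
    have k: "\<bar>k\<bar> \<ge> 1/2"
    proof -
      from assms(6) obtain n :: int where n: "k = real_of_int n + 1/2" unfolding half_integer_def by blast
      show ?thesis
      proof (cases "n \<ge> 0")
        case True thus ?thesis using n by simp
      next
        case False hence "n \<le> -1" by simp
        hence "real_of_int n \<le> -1" by simp
        thus ?thesis using n by simp
      qed
    qed
    have absa: "\<bar>a\<bar> = M" using assms(4) by simp
    have "\<bar>k * a\<bar> = \<bar>k\<bar> * M" using absa by (simp add: abs_mult)
    hence "\<bar>\<omega>\<bar> * (2 * M^2) = \<bar>k\<bar> * M" unfolding ka by (simp add: abs_mult)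
    moreover have "\<bar>k\<bar> * M \<ge> M / 2" using k M by simp
    ultimately have "\<bar>\<omega>\<bar> * (2 * M^2) \<ge> M / 2" by simp
    hence om1: "\<bar>\<omega>\<bar> * (4 * M) \<ge> 1" using M by (simp add: power2_eq_square field_simps)
    have "m * (4 * M) \<le> 1" using Mm by (simp add: algebra_simps)
    hence "m * (4 * M) \<le> \<bar>\<omega>\<bar> * (4 * M)" using om1 by linarith
    hence wm: "\<bar>\<omega>\<bar> \<ge> m" using M by (simp add: mult_le_cancel_right)
    have Ueq: "(\<omega> * (t^2+M^2) + k * a)/(t-M) = \<omega> * (t + M)" if t: "t > M" for t
    proof -
      have "\<omega> * (t^2+M^2) + k * a = \<omega> * (t + M) * (t - M)" unfolding ka by (simp add: algebra_simps power2_eq_square)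
      thus ?thesis using t by simp
    qed
    have "\<exists>R c. R > M \<and> c > 0 \<and> (\<forall>r \<ge> R. P r \<ge> c / r)"
    proof (cases "\<omega> < 0")
      case True
      show ?thesis
      proof (rule inf_core[where x=x and y=y and P=P and m=m and lam=lam and w="-\<omega>" and rho=M, OF m M])
        show "m \<le> - \<omega>" using wm True by simp
        fix r assume r: "r > M"
        show "(x has_real_derivative (2 * (- \<omega>) * (r + M) * y r + lam * P r) / (r - M)) (at r)"
          using dx[OF r] unfolding Ueq[OF r] by (simp add: algebra_simps)
        show "(y has_real_derivative (- 2 * (- \<omega>) * (r + M) * x r + m * r * P r) / (r - M)) (at r)"
          using dy[OF r] unfolding Ueq[OF r] by (simp add: algebra_simps)
        show "(P has_real_derivative 4 * (m * r * y r + lam * x r) / (r - M)) (at r)"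
          using dP[OF r] .
        show "(x r)^2 + (y r)^2 \<le> (P r)^2 / 4" by (rule cone)
        show "P r > 0" using pos[OF r] .
      qed
    next
      case False
      hence om: "\<omega> > 0" using wm m by auto
      show ?thesis
      proof (rule inf_core[where x="\<lambda>t. - x t" and y=y and P=P and m=m and lam="-lam" and w="\<omega>" and rho=M, OF m M])
        show "m \<le> \<omega>" using wm om by simp
        fix r assume r: "r > M"
        have "((\<lambda>t. - x t) has_real_derivative - ((-2*((\<omega> * (r^2+M^2) + k * a)/(r-M))* y r + lam * P r)/(r-M))) (at r)"
          using DERIV_minus[OF dx[OF r]] .
        moreover have "- ((-2*((\<omega> * (r^2+M^2) + k * a)/(r-M))* y r + lam * P r)/(r-M))
            = (2 * \<omega> * (r + M) * y r + (- lam) * P r) / (r - M)"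
          unfolding Ueq[OF r] by (rule neg_div) (simp add: algebra_simps)
        ultimately show "((\<lambda>t. - x t) has_real_derivative (2 * \<omega> * (r + M) * y r + (- lam) * P r) / (r - M)) (at r)"
          by simp
        show "(y has_real_derivative (- 2 * \<omega> * (r + M) * (- x r) + m * r * P r) / (r - M)) (at r)"
          using dy[OF r] unfolding Ueq[OF r] by (simp add: algebra_simps)
        show "(P has_real_derivative 4 * (m * r * y r + (- lam) * (- x r)) / (r - M)) (at r)"
          using dP[OF r] by simp
        show "(- x r)^2 + (y r)^2 \<le> (P r)^2 / 4" using cone[of r] by simp
        show "P r > 0" using pos[OF r] .
      qed
    qed
    then obtain R c where R: "R > M" and c: "c > 0" and low: "\<And>r. r \<ge> R \<Longrightarrow> P r \<ge> c / r" by blast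
    have lowF: "F t \<ge> c / t" if t: "t \<ge> R" for t
    proof -
      have tM: "t > M" using t R by simp
      have w1: "(t^2 + M^2) / (t - M)^2 \<ge> 1"
      proof -
        have "(t - M)^2 \<le> t^2 + M^2" using tM M by (simp add: power2_eq_square algebra_simps)
        moreover have "(t - M)^2 > 0" using tM by simp
        ultimately show ?thesis by simp
      qed
      have "c / t \<le> P t" using low[OF t] .
      also have "P t \<le> P t * ((t^2 + M^2) / (t - M)^2)" using mult_left_mono[OF w1 nn[of t]] by simp
      finally show ?thesis unfolding FP .
    qed
    show False using infinity_contra[OF bound cont lowF c R] R M by simp
  qed
qed

end
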